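(* Let $\mathcal{H}=(C,F,D,G)$ be a hybrid system on $\mathcal{X}$ such that $F$ is outer semicontinuous, locally bounded, with nonempty convex values on $C$, and $G$ has nonempty values on $D$. Let $p$ be an atomic proposition such that $K:=\{x\in\mathcal{X}:p(x)=1\}$ is closed and $K\subset C\cup D$. Suppose there exist a continuously differentiable barrier function candidate $B:\mathcal{X}\to\mathbb{R}$ with respect to $K$ for $\mathcal{H}$ and an open neighborhood $U(\partial K)$ of $\partial K$ such that: (1) $\langle\nabla B(x),\eta\rangle\le0$ for all $x\in C\cap(U(\partial K)\setminus K)$ and all $\eta\in F(x)\cap T_C(x)$; (2) $B(\eta)\le0$ for all $x\in D\cap K$ and all $\eta\in G(x)$; (3) $G(D\cap K)\subset C\cup D$. Then for every solution $\phi$ to $\mathcal{H}$ with $\phi(0,0)\Vdash p$ and every $(t,j)\in\operatorname{dom}\phi$, $(\phi,(t,j))\models\Box p$.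
   Context: Hybrid systems. A hybrid system $\mathcal{H}=(C,F,D,G)$ on a state space $\mathcal{X}\subset\mathbb{R}^n$ is given by a flow set $C\subset\mathcal{X}$, a set-valued flow map $F:\mathcal{X}\rightrightarrows\mathcal{X}$, a jump set $D\subset\mathcal{X}$ and a set-valued jump map $G:\mathcal{X}\rightrightarrows\mathcal{X}$, and represents $\dot x\in F(x)$ for $x\in C$, $x^+\in G(x)$ for $x\in D$. Standing assumptions: $C\subset\operatorname{dom}F$, $D\subset\operatorname{dom}G$, $\overline{C}\cup D\cup G(D)\subset\mathcal{X}$ ($\overline C$ is the closure of $C$). A set $E\subset\mathbb{R}_{\ge0}\times\mathbb{N}$ is a hybrid time domain if for every $(T,J)\in E$ there are $0=t_0\le t_1\le\dots\le t_{J+1}$ with $E\cap([0,T]\times\{0,\dots,J\})=\bigcup_{j=0}^J([t_j,t_{j+1}]\times\{j\})$. A hybrid arc is a map $\phi:\operatorname{dom}\phi\to\mathbb{R}^n$ on a hybrid time domain such that for each $j$, $t\mapsto\phi(t,j)$ is locally absolutely continuous on $I^j=\{t:(t,j)\in\operatorname{dom}\phi\}$. A hybrid arc $\phi$ is a solution to $\mathcal{H}$ if (i) $\phi(0,0)\in\overline C\cup D$; (ii) for each $j$ such that $I^j$ has nonempty interior, $\phi(t,j)\in C$ for all $t\in\operatorname{int}I^j$ and $\dot\phi(t,j)\in F(\phi(t,j))$ for almost all $t\in I^j$; (iii) for each $(t,j)\in\operatorname{dom}\phi$ with $(t,j+1)\in\operatorname{dom}\phi$, $\phi(t,j)\in D$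 and $\phi(t,j+1)\in G(\phi(t,j))$. Temporal logic. An atomic proposition is a function $p:\mathcal{X}\to\{0,1\}$; write $\phi(t,j)\Vdash p$ if $p(\phi(t,j))=1$. $(\phi,(t,j))\models p$ iff $\phi(t,j)\Vdash p$; $(\phi,(t,j))\models\Box p$ iff $(\phi,(t',j'))\models p$ for all $(t',j')\in\operatorname{dom}\phi$ with $t'+j'\ge t+j$. The set $K$ is assumed nonempty. A function $B:\mathcal{X}\to\mathbb{R}$ is a barrier function candidate with respect to $K$ for $\mathcal{H}$ if $B(x)\le0$ for all $x\in K$ and $B(x)>0$ for all $x\in(C\cup D\cup G(D))\setminus K$. The tangent cone $T_C(x)$ of $C$ at $x$ is the set of $w$ for which there exist $x_i\in C$, $\tau_i>0$ with $x_i\to x$, $\tau_i\searrow0$ and $w=\lim_i (x_i-x)/\tau_i$. $\partial K$ is the boundary of $K$. *)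

theory Defs
  imports "HOL-Analysis.Analysis"
begin

definition sv_dom :: "('a \<Rightarrow> 'b set) \<Rightarrow> 'a set" where
  "sv_dom F = {x. F x \<noteq> {}}"

definition outer_semicontinuous_on ::
  "'a::real_normed_vector set \<Rightarrow> ('a \<Rightarrow> 'b::real_normed_vector set) \<Rightarrow> bool" where
  "outer_semicontinuous_on X F \<longleftrightarrow>
     (\<forall>x\<in>X. \<forall>xs ys y. (\<forall>i. xs i \<in> X) \<and> xs \<longlonglongrightarrow> x \<and>
        (\<forall>i. ys i \<in> F (xs i)) \<and> ys \<longlonglongrightarrow> y \<longrightarrow> y \<in> F x)"

definition locally_bounded_on ::
  "'a::real_normed_vector set \<Rightarrow> ('a \<Rightarrow> 'b::real_normed_vector set) \<Rightarrow> bool" where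
  "locally_bounded_on X F \<longleftrightarrow>
     (\<forall>x\<in>X. \<exists>V. open V \<and> x \<in> V \<and> bounded (\<Union> (F ` (V \<inter> X))))"

definition tangent_cone :: "'a::real_normed_vector set \<Rightarrow> 'a \<Rightarrow> 'a set" where
  "tangent_cone C x = {w. \<exists>xs \<tau>. (\<forall>i. xs i \<in> C) \<and> xs \<longlonglongrightarrow> x \<and>
      (\<forall>i. \<tau> i > (0::real)) \<and> decseq \<tau> \<and> \<tau> \<longlonglongrightarrow> 0 \<and>
      (\<lambda>i. (1 / \<tau> i) *\<^sub>R (xs i - x)) \<longlonglongrightarrow> w}"

definition hybrid_time_domain :: "(real \<times> nat) set \<Rightarrow> bool" where
  "hybrid_time_domain E \<longleftrightarrow>
     (\<forall>(T, J)\<in>E. \<exists>t :: nat \<Rightarrow> real. t 0 = 0 \<and> (\<forall>j\<le>J. t j \<le> t (Suc j)) \<and>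
        E \<inter> ({0..T} \<times> {0..J}) = (\<Union>j\<in>{0..J}. {t j..t (Suc j)} \<times> {j}))"

definition time_slice :: "(real \<times> nat) set \<Rightarrow> nat \<Rightarrow> real set" where
  "time_slice E j = {t. (t, j) \<in> E}"

definition abs_continuous_on_interval ::
  "(real \<Rightarrow> 'a::real_normed_vector) \<Rightarrow> real \<Rightarrow> real \<Rightarrow> bool" where
  "abs_continuous_on_interval f a b \<longleftrightarrow>
     (\<forall>\<epsilon>>0. \<exists>\<delta>>0. \<forall>(n::nat) (l::nat \<Rightarrow> real) u.
        (\<forall>i<n. a \<le> l i \<and> l i \<le> u i \<and> u i \<le> b) \<and>
        (\<forall>i<n. \<forall>k<n. i \<noteq> k \<longrightarrow> u i \<le> l k \<or> u k \<le> l i) \<and>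
        (\<Sum>i<n. u i - l i) < \<delta>
        \<longrightarrow> (\<Sum>i<n. norm (f (u i) - f (l i))) < \<epsilon>)"

definition locally_abs_continuous_on :: "real set \<Rightarrow> (real \<Rightarrow> 'a::real_normed_vector) \<Rightarrow> bool" where
  "locally_abs_continuous_on I f \<longleftrightarrow>
     (\<forall>a b. a \<le> b \<and> {a..b} \<subseteq> I \<longrightarrow> abs_continuous_on_interval f a b)"

text \<open>A hybrid arc is a function phi defined on the hybrid time domain E
  (values outside E are irrelevant).\<close>
definition hybrid_arc :: "(real \<times> nat) set \<Rightarrow> (real \<Rightarrow> nat \<Rightarrow> 'a::real_normed_vector) \<Rightarrow> bool" where
  "hybrid_arc E \<phi> \<longleftrightarrow> hybrid_time_domain E \<and>
     (\<forall>j. locally_abs_continuous_on (time_slice E j) (\<lambda>t. \<phi> t j))"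

definition is_solution ::
  "'a::euclidean_space set \<Rightarrow> ('a \<Rightarrow> 'a set) \<Rightarrow> 'a set \<Rightarrow> ('a \<Rightarrow> 'a set) \<Rightarrow>
   (real \<times> nat) set \<Rightarrow> (real \<Rightarrow> nat \<Rightarrow> 'a) \<Rightarrow> bool" where
  "is_solution C F D G E \<phi> \<longleftrightarrow>
     hybrid_arc E \<phi> \<and>
     \<phi> 0 0 \<in> closure C \<union> D \<and>
     (\<forall>j. interior (time_slice E j) \<noteq> {} \<longrightarrow>
        (\<forall>t\<in>interior (time_slice E j). \<phi> t j \<in> C) \<and>
        (\<exists>N. negligible N \<and>
           (\<forall>t\<in>time_slice E j - N. \<exists>v.
              ((\<lambda>s. \<phi> s j) has_vector_derivative v) (at t within time_slice E j) \<and>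
              v \<in> F (\<phi> t j)))) \<and>
     (\<forall>t j. (t, j) \<in> E \<and> (t, Suc j) \<in> E \<longrightarrow>
        \<phi> t j \<in> D \<and> \<phi> t (Suc j) \<in> G (\<phi> t j))"

text \<open>Atomic propositions p : X \<rightarrow> {0,1} are encoded as predicates
  ('p x' means p(x) = 1).\<close>
definition models_always ::
  "(real \<times> nat) set \<Rightarrow> (real \<Rightarrow> nat \<Rightarrow> 'a) \<Rightarrow> real \<times> nat \<Rightarrow> ('a \<Rightarrow> bool) \<Rightarrow> bool" where
  "models_always E \<phi> tj p \<longleftrightarrow>
     (\<forall>(t', j')\<in>E. t' + real j' \<ge> fst tj + real (snd tj) \<longrightarrow> p (\<phi> t' j'))"

definition barrier_candidate ::
  "'a set \<Rightarrow> 'a set \<Rightarrow> ('a \<Rightarrow> 'a set) \<Rightarrow> 'a set \<Rightarrow> ('a \<Rightarrow> real) \<Rightarrow> bool" where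
  "barrier_candidate C D G K B \<longleftrightarrow>
     (\<forall>x\<in>K. B x \<le> 0) \<and>
     (\<forall>x\<in>(C \<union> D \<union> \<Union>(G ` D)) - K. B x > 0)"

definition C1_with_gradient :: "'a::euclidean_space set \<Rightarrow> ('a \<Rightarrow> real) \<Rightarrow> ('a \<Rightarrow> 'a) \<Rightarrow> bool" where
  "C1_with_gradient X B gradB \<longleftrightarrow>
     (\<exists>W. open W \<and> X \<subseteq> W \<and>
        (\<forall>x\<in>W. (B has_derivative (\<lambda>h. gradB x \<bullet> h)) (at x)) \<and>
        continuous_on W gradB)"

end

theory Submission
  imports Defs
begin

lemma ac_imp_cont:
  fixes f :: "real \<Rightarrow> 'a::real_normed_vector"
  assumes "abs_continuous_on_interval f a b"
  shows "continuous_on {a..b} f"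
  unfolding continuous_on_iff
proof (intro ballI allI impI)
  fix x and e :: real assume x: "x \<in> {a..b}" and e: "0 < e"
  obtain d where d: "d > 0" and H0: "\<forall>(n::nat) (l::nat \<Rightarrow> real) u. (\<forall>i<n. a \<le> l i \<and> l i \<le> u i \<and> u i \<le> b) \<and>
        (\<forall>i<n. \<forall>k<n. i \<noteq> k \<longrightarrow> u i \<le> l k \<or> u k \<le> l i) \<and>
        (\<Sum>i<n. u i - l i) < d \<longrightarrow> (\<Sum>i<n. norm (f (u i) - f (l i))) < e"
    using assms[unfolded abs_continuous_on_interval_def, rule_format, OF e] by (elim exE conjE) (rule that; assumption)
  show "\<exists>d>0. \<forall>x'\<in>{a..b}. dist x' x < d \<longrightarrow> dist (f x') (f x) < e"
  proof (intro exI[of _ d] conjI ballI impI d)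
    fix y assume y: "y \<in> {a..b}" and dy: "dist y x < d"
    have "(\<Sum>i<(1::nat). norm (f ((\<lambda>_. max x y) i) - f ((\<lambda>_. min x y) i))) < e"
      by (rule H0[rule_format, of 1 "\<lambda>_. min x y" "\<lambda>_. max x y"]) (use x y dy in \<open>auto simp: dist_real_def\<close>)
    hence 1: "norm (f (max x y) - f (min x y)) < e" by simp
    show "dist (f y) (f x) < e"
    proof (cases "x \<le> y")
      case True then show ?thesis using 1 by (simp add: dist_norm max_def min_def)
    next
      case False then show ?thesis using 1 norm_minus_commute[of "f x" "f y"] by (simp add: dist_norm max_def min_def)
    qed
  qed
qed
lemma ac_deriv_nonpos:
  fixes h :: "real \<Rightarrow> real"
  assumes ab: "a \<le> b" and AC: "abs_continuous_on_interval h a b" and N: "negligible N"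
    and der: "\<And>t. a < t \<Longrightarrow> t < b \<Longrightarrow> t \<notin> N \<Longrightarrow> \<exists>d. (h has_real_derivative d) (at t) \<and> d \<le> 0"
  shows "h b \<le> h a"
proof (rule ccontr)
  assume "\<not> h b \<le> h a"
  hence hab: "h a < h b" by simp
  with ab have ab': "a < b" by (cases "a = b") auto
  define L where "L = (h b - h a) / 2"
  define c where "c = L / (b - a)"
  have L: "L > 0" using hab by (simp add: L_def)
  have c: "c > 0" using L ab' by (simp add: c_def)
  define g where "g t = h t - c * (t - a)" for t
  have gab: "g b = g a + L" using ab' by (simp add: g_def c_def L_def field_simps)
  have hcont: "continuous_on {a..b} h" by (rule ac_imp_cont[OF AC])
  have gcont: "continuous_on {a..b} g" unfolding g_def by (intro continuous_intros hcont)
  have gder: "\<exists>d. (g has_real_derivative d) (at t) \<and> d < 0" if tt: "a < t" "t < b" "t \<notin> N" for t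
  proof -
    obtain d where hd: "(h has_real_derivative d) (at t)" "d \<le> 0" using der[OF tt] by blast
    have "(g has_real_derivative (d - c)) (at t)" unfolding g_def
      using hd(1) by (auto intro!: derivative_eq_intros)
    then show ?thesis using hd(2) c by (intro exI[of _ "d - c"]) auto
  qed
  have L4: "L/4 > 0" using L by simp
  obtain \<delta> where \<delta>: "\<delta> > 0" and Hh0: "\<forall>(n::nat) (l::nat \<Rightarrow> real) u. (\<forall>i<n. a \<le> l i \<and> l i \<le> u i \<and> u i \<le> b) \<and>
        (\<forall>i<n. \<forall>k<n. i \<noteq> k \<longrightarrow> u i \<le> l k \<or> u k \<le> l i) \<and>
        (\<Sum>i<n. u i - l i) < \<delta> \<longrightarrow> (\<Sum>i<n. norm (h (u i) - h (l i))) < L/4"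
    using AC[unfolded abs_continuous_on_interval_def, rule_format, OF L4] by (elim exE conjE) (rule that; assumption)
  note Hh = Hh0[rule_format]
  define \<delta>' where "\<delta>' = min \<delta> (L / (4 * c))"
  have \<delta>': "\<delta>' > 0" using \<delta> L c by (simp add: \<delta>'_def)
  have Gsum: "(\<Sum>i<n. \<bar>g (u i) - g (l i)\<bar>) < L/2"
    if H1: "\<forall>i<n. a \<le> l i \<and> l i \<le> u i \<and> u i \<le> b"
      and H2: "\<forall>i<n. \<forall>k<n. i \<noteq> k \<longrightarrow> u i \<le> l k \<or> u k \<le> l i"
      and H3: "(\<Sum>i<n. u i - l i) < \<delta>'" for n :: nat and l u :: "nat \<Rightarrow> real"
  proof -
    have each: "\<bar>g (u i) - g (l i)\<bar> \<le> \<bar>h (u i) - h (l i)\<bar> + c * (u i - l i)" if "i < n" for i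
    proof -
      have e1: "g (u i) - g (l i) = (h (u i) - h (l i)) - c * (u i - l i)"
        by (simp add: g_def algebra_simps)
      have "c * (u i - l i) \<ge> 0" using c H1 that by simp
      then show ?thesis unfolding e1 using abs_triangle_ineq4[of "h (u i) - h (l i)" "c * (u i - l i)"]
        by simp
    qed
    have "(\<Sum>i<n. \<bar>g (u i) - g (l i)\<bar>) \<le> (\<Sum>i<n. \<bar>h (u i) - h (l i)\<bar> + c * (u i - l i))"
      by (rule sum_mono) (use each in auto)
    also have "\<dots> = (\<Sum>i<n. norm (h (u i) - h (l i))) + c * (\<Sum>i<n. u i - l i)"
      by (simp add: sum.distrib sum_distrib_left)
    also have "\<dots> < L/4 + L/4"
    proof -
      have "(\<Sum>i<n. norm (h (u i) - h (l i))) < L/4"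
        using Hh[of n l u] H1 H2 H3 \<delta>'_def by auto
      moreover have "c * (\<Sum>i<n. u i - l i) \<le> c * (L / (4 * c))"
        using H3 c by (intro mult_left_mono) (auto simp: \<delta>'_def)
      moreover have "c * (L / (4 * c)) = L/4" using c by (simp add: field_simps)
      ultimately show ?thesis by linarith
    qed
    finally show ?thesis by simp
  qed
  define y1 where "y1 = g a + L/4"
  define y2 where "y2 = g a + 3*L/4"
  define Q where "Q = {t\<in>{a..b}. y1 \<le> g t \<and> g t \<le> y2 \<and> (\<forall>t'\<in>{t..b}. g t \<le> g t')}"
  have Qeq: "Q = {t\<in>{a..b}. y1 \<le> g t} \<inter> {t\<in>{a..b}. g t \<le> y2} \<inter>
      (\<Inter>t'\<in>{a..b}. {t\<in>{a..b}. t' \<le> t} \<union> {t\<in>{a..b}. g t \<le> g t'})"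
  proof (intro equalityI subsetI)
    fix t assume t: "t \<in> Q"
    have "t \<in> {t\<in>{a..b}. t' \<le> t} \<union> {t\<in>{a..b}. g t \<le> g t'}" if "t' \<in> {a..b}" for t'
    proof (cases "t' \<le> t")
      case False then show ?thesis using t that unfolding Q_def by auto
    qed (use t in \<open>auto simp: Q_def\<close>)
    then show "t \<in> {t\<in>{a..b}. y1 \<le> g t} \<inter> {t\<in>{a..b}. g t \<le> y2} \<inter>
      (\<Inter>t'\<in>{a..b}. {t\<in>{a..b}. t' \<le> t} \<union> {t\<in>{a..b}. g t \<le> g t'})"
      using t unfolding Q_def by blast
  next
    fix t assume t: "t \<in> {t\<in>{a..b}. y1 \<le> g t} \<inter> {t\<in>{a..b}. g t \<le> y2} \<inter>
      (\<Inter>t'\<in>{a..b}. {t\<in>{a..b}. t' \<le> t} \<union> {t\<in>{a..b}. g t \<le> g t'})"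
    have "g t \<le> g t'" if "t' \<in> {t..b}" for t'
    proof -
      have "t' \<in> {a..b}" using t that by auto
      then have "t' \<le> t \<or> g t \<le> g t'" using t by blast
      then show ?thesis using that by auto
    qed
    then show "t \<in> Q" using t unfolding Q_def by blast
  qed
  have Qclosed: "closed Q" unfolding Qeq
    by (intro closed_Int closed_INT closed_Un ballI continuous_on_closed_Collect_le gcont
        continuous_on_const continuous_on_id closed_atLeastAtMost)
  have Qsub: "Q \<subseteq> {a..b}" unfolding Q_def by auto
  have Qcompact: "compact Q"
    using Qclosed Qsub by (metis bounded_subset compact_eq_bounded_closed compact_Icc)
  have Qmono: "g q \<le> g q'" if "q \<in> Q" "q' \<in> Q" "q \<le> q'" for q q'
    using that unfolding Q_def by auto
  have Qopen: "a < q \<and> q < b" if "q \<in> Q" for q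
  proof -
    have "q \<noteq> a" using that L unfolding Q_def y1_def by auto
    moreover have "q \<noteq> b" using that L gab unfolding Q_def y2_def by auto
    ultimately show ?thesis using that unfolding Q_def by auto
  qed
  have hsurj: "\<exists>q\<in>Q. g q = y" if y: "y1 \<le> y" "y \<le> y2" for y
  proof -
    define P where "P = {t\<in>{a..b}. g t \<le> y}"
    have Pc: "closed P" unfolding P_def
      by (intro continuous_on_closed_Collect_le gcont continuous_on_const closed_atLeastAtMost)
    have aP: "a \<in> P" using ab y L unfolding P_def y1_def by auto
    have Pb: "bdd_above P" unfolding P_def by (rule bdd_aboveI[of _ b]) auto
    define s where "s = Sup P"
    have sP: "s \<in> P" unfolding s_def using closed_contains_Sup[OF _ Pb Pc] aP by blast
    have sup: "t \<le> s" if "t \<in> P" for t unfolding s_def using cSup_upper[OF that Pb] .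
    have sb: "s \<le> b" "a \<le> s" using sP unfolding P_def by auto
    have "\<exists>x. s \<le> x \<and> x \<le> b \<and> g x = y"
      using sP y L gab sb by (intro IVT' continuous_on_subset[OF gcont]) (auto simp: P_def y2_def)
    then obtain x where x: "s \<le> x" "x \<le> b" "g x = y" by blast
    have "x \<in> P" using x sb unfolding P_def by auto
    hence "x = s" using sup x by fastforce
    have gs: "g s = y" using x \<open>x = s\<close> by simp
    have "s \<in> Q" unfolding Q_def
    proof (safe)
      show "s \<in> {a..b}" using sb by auto
      show "y1 \<le> g s" "g s \<le> y2" using gs y by auto
      fix t' assume "t' \<in> {s..b}"
      then show "g s \<le> g t'" using sup[of t'] sb gs unfolding P_def by force
    qed
    then show ?thesis using gs by blast
  qed
  have QN: "Q \<subseteq> N"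
  proof
    fix q assume q: "q \<in> Q"
    show "q \<in> N"
    proof (rule ccontr)
      assume "q \<notin> N"
      then obtain d where d: "(g has_real_derivative d) (at q)" "d < 0" using gder Qopen q by blast
      obtain e where e: "e > 0" "\<And>k. k > 0 \<Longrightarrow> k < e \<Longrightarrow> g q > g (q + k)"
        using DERIV_neg_dec_right[OF d] by blast
      define k where "k = min (e/2) ((b - q)/2)"
      have k: "k > 0" "k < e" "q + k \<le> b" using e Qopen[OF q] unfolding k_def by (auto simp: min_def field_simps)
      have "g q \<le> g (q + k)" using q k unfolding Q_def by auto
      with e(2)[OF k(1,2)] show False by simp
    qed
  qed
  have Qneg: "negligible Q" using negligible_subset[OF N QN] .
  obtain T where T: "open T" "Q \<subseteq> T" "(T - Q) \<in> lmeasurable" "emeasure lebesgue (T - Q) < ennreal \<delta>'"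
    using sets_lebesgue_outer_open[OF negligible_imp_sets[OF Qneg] \<delta>'] by blast
  have symd: "(T - Q) - T \<union> (T - (T - Q)) = Q" using T(2) by blast
  have negsd: "negligible ((T - Q) - T \<union> (T - (T - Q)))" using symd Qneg by simp
  have Tm: "T \<in> lmeasurable" using lmeasurable_negligible_symdiff[OF T(3) negsd] .
  have mTQ: "measure lebesgue T = measure lebesgue (T - Q)"
    using measure_negligible_symdiff[OF T(3) negsd] .
  have "emeasure lebesgue (T - Q) = ennreal (measure lebesgue (T - Q))"
    using emeasure_eq_measure2[OF T(3)] .
  hence mT: "measure lebesgue T < \<delta>'" using T(4) mTQ by (simp add: ennreal_less_iff)
  obtain r where r: "r > 0" "\<And>x y. x \<in> Q \<Longrightarrow> y \<in> - T \<Longrightarrow> r \<le> dist x y"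
  proof -
    have "Q \<inter> - T = {}" using T(2) by blast
    then obtain r where "r > 0" "\<forall>x\<in>Q. \<forall>y\<in>- T. r \<le> dist x y"
      using separate_compact_closed[OF Qcompact _ , of "- T"] T(1) by (auto simp: closed_Compl)
    then show ?thesis using that by blast
  qed
  have inT: "y \<in> T" if "x \<in> Q" "dist x y < r" for x y
    using r(2)[OF that(1), of y] that(2) by (cases "y \<in> T") auto
  obtain M :: nat where M: "(b - a) / r < real M" using reals_Archimedean2 by blast
  have M0: "real M > 0" using M ab' r(1) by (smt (verit) divide_pos_pos)
  define w where "w = (b - a) / real M"
  have w: "w > 0" "w < r" using ab' M0 M r(1) by (auto simp: w_def field_simps)
  have aMw: "a + real M * w = b" using M0 by (simp add: w_def)
  define pc where "pc k = {a + real k * w .. a + real (Suc k) * w}" for k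
  define S where "S = {k\<in>{..<M}. Q \<inter> pc k \<noteq> {}}"
  define lf where "lf k = (if k \<in> S then Inf (Q \<inter> pc k) else a + real k * w)" for k
  define uf where "uf k = (if k \<in> S then Sup (Q \<inter> pc k) else a + real k * w)" for k
  have pcstep: "a + real k * w \<le> a + real (Suc k) * w" for k using w by simp
  have P0: "lf k \<in> Q \<inter> pc k \<and> uf k \<in> Q \<inter> pc k \<and> (\<forall>q\<in>Q \<inter> pc k. lf k \<le> q \<and> q \<le> uf k)"
    if "k \<in> S" for k
  proof -
    have cl: "closed (Q \<inter> pc k)" using Qclosed by (simp add: pc_def closed_Int)
    have ne: "Q \<inter> pc k \<noteq> {}" using that by (simp add: S_def)
    have bb: "bdd_below (Q \<inter> pc k)" "bdd_above (Q \<inter> pc k)" unfolding pc_def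
      by (auto intro: bdd_belowI bdd_aboveI)
    show ?thesis using that closed_contains_Inf[OF ne bb(1) cl] closed_contains_Sup[OF ne bb(2) cl]
        cInf_lower[OF _ bb(1)] cSup_upper[OF _ bb(2)]
      by (simp add: lf_def uf_def)
  qed
  have P1: "a + real k * w \<le> lf k \<and> lf k \<le> uf k \<and> uf k \<le> a + real (Suc k) * w" for k
  proof (cases "k \<in> S")
    case True
    then show ?thesis using P0[OF True] by (auto simp: pc_def)
  next
    case False
    then show ?thesis using pcstep[of k] by (simp add: lf_def uf_def)
  qed
  have kle: "a + real (Suc k) * w \<le> b" if "k < M" for k
  proof -
    have "real (Suc k) * w \<le> real M * w" using that w by (intro mult_right_mono) auto
    then show ?thesis using aMw by linarith
  qed
  have pcT: "pc k \<subseteq> T" if kS: "k \<in> S" for k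
  proof
    fix x assume x: "x \<in> pc k"
    obtain q where q: "q \<in> Q" "q \<in> pc k" using kS by (auto simp: S_def)
    have "dist q x \<le> w" using x q(2) by (auto simp: pc_def dist_real_def algebra_simps)
    then show "x \<in> T" using inT[OF q(1)] w by simp
  qed
  define A where "A k = {a + real k * w ..< a + real (Suc k) * w}" for k
  have Am: "A k \<in> lmeasurable" for k using pcstep[of k] unfolding A_def by (simp add: fmeasurable_def)
  have Ameas: "measure lebesgue (A k) = w" for k using pcstep[of k] by (simp add: A_def algebra_simps)
  have Adisj: "disjoint_family_on A S"
    unfolding disjoint_family_on_def
  proof (intro ballI impI)
    fix m n assume "m \<in> S" "n \<in> S" "m \<noteq> n"
    have aux: "A i \<inter> A j = {}" if "i < j" for i j
    proof -
      have "real (Suc i) * w \<le> real j * w" using that w by (intro mult_right_mono) auto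
      then show ?thesis by (auto simp: A_def)
    qed
    show "A m \<inter> A n = {}"
      using aux[of m n] aux[of n m] \<open>m \<noteq> n\<close> by (cases "m < n") (auto simp: Int_commute)
  qed
  have finS: "finite S" by (simp add: S_def)
  have mU: "measure lebesgue (\<Union>k\<in>S. A k) = (\<Sum>k\<in>S. w)"
  proof -
    have "measure lebesgue (\<Union>k\<in>S. A k) = (\<Sum>k\<in>S. measure lebesgue (A k))"
    proof -
      have As: "A ` S \<subseteq> sets lebesgue" using Am by auto
      have Af: "emeasure lebesgue (A i) \<noteq> \<infinity>" if "i \<in> S" for i using fmeasurableD2[OF Am, of i] by simp
      show ?thesis by (rule measure_finite_Union[OF finS As Adisj Af])
    qed
    then show ?thesis using Ameas by simp
  qed
  have UT: "(\<Union>k\<in>S. A k) \<subseteq> T" using pcT by (force simp: A_def pc_def)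
  have "measure lebesgue (\<Union>k\<in>S. A k) \<le> measure lebesgue T"
    using UT Tm Am by (intro measure_mono_fmeasurable) (auto simp: fmeasurable_def)
  hence sumS: "(\<Sum>k\<in>S. w) < \<delta>'" using mU mT by linarith
  have lensum: "(\<Sum>k<M. uf k - lf k) < \<delta>'"
  proof -
    have "(\<Sum>k<M. uf k - lf k) \<le> (\<Sum>k<M. if k \<in> S then w else 0)"
    proof (rule sum_mono)
      fix k assume "k \<in> {..<M}"
      show "uf k - lf k \<le> (if k \<in> S then w else 0)"
        using P1[of k] by (cases "k \<in> S") (auto simp: lf_def uf_def algebra_simps)
    qed
    also have "\<dots> = (\<Sum>k\<in>{..<M} \<inter> S. w)"
      by (rule sum.inter_restrict[symmetric]) simp
    also have "{..<M} \<inter> S = S" by (auto simp: S_def)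
    finally show ?thesis using sumS by linarith
  qed
  have acsum: "(\<Sum>k<M. \<bar>g (uf k) - g (lf k)\<bar>) < L/2"
  proof (rule Gsum)
    show "\<forall>i<M. a \<le> lf i \<and> lf i \<le> uf i \<and> uf i \<le> b"
    proof (intro allI impI)
      fix i assume "i < M"
      then show "a \<le> lf i \<and> lf i \<le> uf i \<and> uf i \<le> b"
        using P1[of i] kle[of i] w by (smt (verit) of_nat_0_le_iff mult_nonneg_nonneg)
    qed
    show "\<forall>i<M. \<forall>k<M. i \<noteq> k \<longrightarrow> uf i \<le> lf k \<or> uf k \<le> lf i"
    proof (intro allI impI)
      fix i k assume "i < M" "k < M" "i \<noteq> k"
      have aux: "uf i \<le> lf j" if "i < j" for i j
      proof -
        have "real (Suc i) * w \<le> real j * w" using that w by (intro mult_right_mono) auto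
        then show ?thesis using P1[of i] P1[of j] by linarith
      qed
      show "uf i \<le> lf k \<or> uf k \<le> lf i"
        using aux[of i k] aux[of k i] \<open>i \<noteq> k\<close> by (cases "i < k") auto
    qed
    show "(\<Sum>i<M. uf i - lf i) < \<delta>'" by (rule lensum)
  qed
  have claim: "\<exists>v. y1 \<le> v \<and> (\<forall>q\<in>Q. q \<le> a + real m * w \<longrightarrow> g q \<le> v) \<and>
      v - y1 \<le> (\<Sum>k<m. g (uf k) - g (lf k))" if "m \<le> M" for m
    using that
  proof (induction m)
    case 0
    show ?case using Qopen by (intro exI[of _ y1]) force
  next
    case (Suc m)
    then obtain v where v: "y1 \<le> v" "\<forall>q\<in>Q. q \<le> a + real m * w \<longrightarrow> g q \<le> v"
      "v - y1 \<le> (\<Sum>k<m. g (uf k) - g (lf k))" by auto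
    have mM: "m < M" using Suc.prems by simp
    show ?case
    proof (cases "m \<in> S")
      case False
      have "g q \<le> v" if "q \<in> Q" "q \<le> a + real (Suc m) * w" for q
      proof (cases "q \<le> a + real m * w")
        case True then show ?thesis using v(2) that by blast
      next
        case False
        then have "q \<in> Q \<inter> pc m" using that by (auto simp: pc_def)
        then have "m \<in> S" using mM by (auto simp: S_def)
        then show ?thesis using \<open>m \<notin> S\<close> by simp
      qed
      moreover have "uf m = lf m" using False by (simp add: lf_def uf_def)
      ultimately show ?thesis using v by (intro exI[of _ v]) auto
    next
      case True
      note P = P0[OF True]
      have glv: "g (lf m) \<le> v"
      proof (rule ccontr)
        assume "\<not> g (lf m) \<le> v"
        define y where "y = (v + g (lf m)) / 2"
        have y: "y1 \<le> y" "y \<le> y2" "v < y" "y < g (lf m)"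
          using \<open>\<not> g (lf m) \<le> v\<close> v(1) P unfolding y_def Q_def by auto
        obtain q' where q': "q' \<in> Q" "g q' = y" using hsurj[OF y(1,2)] by blast
        have "\<not> q' \<le> a + real m * w" using v(2) q' y(3) by force
        moreover have "q' < lf m"
        proof (rule ccontr)
          assume "\<not> q' < lf m"
          then have "g (lf m) \<le> g q'" using Qmono[of "lf m" q'] P q' by auto
          then show False using q' y by simp
        qed
        ultimately have "q' \<in> Q \<inter> pc m" using P1[of m] q' by (auto simp: pc_def)
        then show False using P \<open>q' < lf m\<close> by force
      qed
      have inc: "g (lf m) \<le> g (uf m)" using Qmono[of "lf m" "uf m"] P P1[of m] by auto
      define v' where "v' = max v (g (uf m))"
      have "g q \<le> v'" if "q \<in> Q" "q \<le> a + real (Suc m) * w" for q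
      proof (cases "q \<le> a + real m * w")
        case True then show ?thesis using v(2) that by (force simp: v'_def)
      next
        case False
        then have "q \<in> Q \<inter> pc m" using that by (auto simp: pc_def)
        then have "q \<le> uf m" using P by blast
        then have "g q \<le> g (uf m)" using Qmono[of q "uf m"] P \<open>q \<in> Q \<inter> pc m\<close> by auto
        then show ?thesis by (simp add: v'_def)
      qed
      moreover have "v' - y1 \<le> (\<Sum>k<Suc m. g (uf k) - g (lf k))"
        using v(3) glv inc by (auto simp: v'_def)
      ultimately show ?thesis using v(1) by (intro exI[of _ v']) (auto simp: v'_def)
    qed
  qed
  obtain v where v: "y1 \<le> v" "\<forall>q\<in>Q. q \<le> a + real M * w \<longrightarrow> g q \<le> v"
      "v - y1 \<le> (\<Sum>k<M. g (uf k) - g (lf k))" using claim[of M] by auto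
  obtain q2 where q2: "q2 \<in> Q" "g q2 = y2" using hsurj[of y2] L by (auto simp: y1_def y2_def)
  have "y2 \<le> v" using v(2) q2 Qsub aMw by force
  moreover have "(\<Sum>k<M. g (uf k) - g (lf k)) \<le> (\<Sum>k<M. \<bar>g (uf k) - g (lf k)\<bar>)"
    by (rule sum_mono) simp
  ultimately have "y2 - y1 < L/2" using v(3) acsum by linarith
  then show False by (simp add: y1_def y2_def)
qed


lemma vd_tangent:
  fixes f :: "real \<Rightarrow> 'a::euclidean_space"
  assumes fd: "(f has_vector_derivative v) (at t)" and e: "e > 0"
    and inC: "\<And>\<tau>. 0 < \<tau> \<Longrightarrow> \<tau> \<le> e \<Longrightarrow> f (t + \<tau>) \<in> C"
  shows "v \<in> tangent_cone C (f t)"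
proof -
  define \<tau> where "\<tau> i = e / real (Suc i)" for i
  have \<tau>pos: "\<tau> i > 0" for i using e by (simp add: \<tau>_def)
  have \<tau>le: "\<tau> i \<le> e" for i using e by (simp add: \<tau>_def field_simps)
  have \<tau>dec: "decseq \<tau>" unfolding decseq_def \<tau>_def using e by (auto intro!: divide_left_mono)
  have \<tau>lim: "\<tau> \<longlonglongrightarrow> 0"
    unfolding \<tau>_def using tendsto_mult[OF tendsto_const[of e] LIMSEQ_inverse_real_of_nat] by (simp add: divide_inverse)
  define xs where "xs i = f (t + \<tau> i)" for i
  have xsC: "xs i \<in> C" for i using inC \<tau>pos \<tau>le by (simp add: xs_def)
  have tl: "(\<lambda>i. t + \<tau> i) \<longlonglongrightarrow> t" using tendsto_add[OF tendsto_const[of t] \<tau>lim] by simp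
  have seq: "filterlim (\<lambda>i. t + \<tau> i) (at t) sequentially"
    unfolding filterlim_at using \<tau>pos tl by (auto intro!: always_eventually simp: less_irrefl dual_order.strict_implies_not_eq)
  have cont: "isCont f t"
    using has_derivative_continuous[OF fd[unfolded has_vector_derivative_def]] .
  have xslim: "xs \<longlonglongrightarrow> f t" unfolding xs_def using isCont_tendsto_compose[OF cont tl] .
  have quot: "((\<lambda>y. (1 / norm (y - t)) *\<^sub>R (f y - (f t + (y - t) *\<^sub>R v))) \<longlongrightarrow> 0) (at t)"
    using fd unfolding has_vector_derivative_def has_derivative_within[of f _ t UNIV] by simp
  have q2: "(\<lambda>i. (1 / norm ((t + \<tau> i) - t)) *\<^sub>R (f (t + \<tau> i) - (f t + ((t + \<tau> i) - t) *\<^sub>R v))) \<longlonglongrightarrow> 0"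
    using filterlim_compose[OF quot seq] by simp
  have eq: "(1 / norm ((t + \<tau> i) - t)) *\<^sub>R (f (t + \<tau> i) - (f t + ((t + \<tau> i) - t) *\<^sub>R v)) + v
      = (1 / \<tau> i) *\<^sub>R (xs i - f t)" for i
  proof -
    have n: "norm ((t + \<tau> i) - t) = \<tau> i" using \<tau>pos[of i] by simp
    have "(1 / \<tau> i) *\<^sub>R (f (t + \<tau> i) - (f t + \<tau> i *\<^sub>R v)) = (1 / \<tau> i) *\<^sub>R (xs i - f t) - ((1 / \<tau> i) * \<tau> i) *\<^sub>R v"
      by (simp add: xs_def scaleR_diff_right scaleR_add_right algebra_simps)
    also have "(1 / \<tau> i) * \<tau> i = 1" using \<tau>pos[of i] by simp
    finally show ?thesis unfolding n by simp
  qed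
  have "(\<lambda>i. (1 / \<tau> i) *\<^sub>R (xs i - f t)) \<longlonglongrightarrow> 0 + v"
    using tendsto_add[OF q2 tendsto_const[of v]] unfolding eq .
  then have "(\<lambda>i. (1 / \<tau> i) *\<^sub>R (xs i - f t)) \<longlonglongrightarrow> v" by simp
  then show ?thesis unfolding tangent_cone_def
    by (intro CollectI exI[of _ xs] exI[of _ \<tau>]) (use xsC xslim \<tau>pos \<tau>dec \<tau>lim in auto)
qed

lemma chain_inner:
  assumes "(B has_derivative (\<lambda>h. gB \<bullet> h)) (at (f t))" "(f has_vector_derivative v) (at t)"
  shows "((\<lambda>s. B (f s)) has_real_derivative (gB \<bullet> v)) (at t)"
proof -
  have "((\<lambda>s. B (f s)) has_derivative (\<lambda>h. gB \<bullet> (h *\<^sub>R v))) (at t)"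
    using has_derivative_compose[OF assms(2)[unfolded has_vector_derivative_def] assms(1)] by simp
  then show ?thesis unfolding has_field_derivative_def
    by (rule has_derivative_eq_rhs) (simp add: fun_eq_iff mult.commute)
qed

lemma lip_ball:
  fixes B :: "'a::euclidean_space \<Rightarrow> real"
  assumes der: "\<And>x. x \<in> cball x0 \<rho> \<Longrightarrow> (B has_derivative (\<lambda>h. gradB x \<bullet> h)) (at x)"
   and cont: "continuous_on (cball x0 \<rho>) gradB"
  obtains M where "M \<ge> 0" "\<And>x y. x \<in> cball x0 \<rho> \<Longrightarrow> y \<in> cball x0 \<rho> \<Longrightarrow> \<bar>B x - B y\<bar> \<le> M * norm (x - y)"
proof -
  have "compact (gradB ` cball x0 \<rho>)" by (rule compact_continuous_image[OF cont compact_cball])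
  then have "bounded (gradB ` cball x0 \<rho>)" by (rule compact_imp_bounded)
  then obtain M0 where M0: "\<forall>z\<in>gradB ` cball x0 \<rho>. norm z \<le> M0" unfolding bounded_iff by blast
  define M where "M = max M0 0"
  have M: "M \<ge> 0" "\<And>x. x \<in> cball x0 \<rho> \<Longrightarrow> norm (gradB x) \<le> M" using M0 by (auto simp: M_def le_max_iff_disj)
  have "norm (B x - B y) \<le> M * norm (x - y)" if x: "x \<in> cball x0 \<rho>" and y: "y \<in> cball x0 \<rho>" for x y
  proof (rule differentiable_bound[where f'="\<lambda>x h. gradB x \<bullet> h"])
    show "convex (cball x0 \<rho>)" by simp
    show "(B has_derivative (\<lambda>h. gradB z \<bullet> h)) (at z within cball x0 \<rho>)" if "z \<in> cball x0 \<rho>" for z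
      using der[OF that] by (rule has_derivative_at_withinI)
    show "onorm (\<lambda>h. gradB z \<bullet> h) \<le> M" if "z \<in> cball x0 \<rho>" for z
    proof (rule onorm_le)
      fix h
      have "norm (gradB z \<bullet> h) \<le> norm (gradB z) * norm h" using Cauchy_Schwarz_ineq2 by simp
      also have "\<dots> \<le> M * norm h" using M(2)[OF that] by (intro mult_right_mono) auto
      finally show "norm (gradB z \<bullet> h) \<le> M * norm h" .
    qed
  qed (use x y in auto)
  then show ?thesis using that M(1) by auto
qed

lemma ac_comp_lip:
  fixes f :: "real \<Rightarrow> 'a::real_normed_vector" and B :: "'a \<Rightarrow> real"
  assumes AC: "abs_continuous_on_interval f a b" and fin: "\<And>t. t \<in> {a..b} \<Longrightarrow> f t \<in> S"
   and lip: "\<And>x y. x \<in> S \<Longrightarrow> y \<in> S \<Longrightarrow> \<bar>B x - B y\<bar> \<le> M * norm (x - y)" and M: "M \<ge> 0"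
  shows "abs_continuous_on_interval (\<lambda>t. B (f t)) a b"
  unfolding abs_continuous_on_interval_def
proof (intro allI impI)
  fix e :: real assume e: "e > 0"
  have e': "e / (M + 1) > 0" using e M by simp
  obtain d where d: "d > 0" and H0: "\<forall>(n::nat) (l::nat \<Rightarrow> real) u. (\<forall>i<n. a \<le> l i \<and> l i \<le> u i \<and> u i \<le> b) \<and>
        (\<forall>i<n. \<forall>k<n. i \<noteq> k \<longrightarrow> u i \<le> l k \<or> u k \<le> l i) \<and>
        (\<Sum>i<n. u i - l i) < d \<longrightarrow> (\<Sum>i<n. norm (f (u i) - f (l i))) < e / (M + 1)"
    using AC[unfolded abs_continuous_on_interval_def, rule_format, OF e'] by (elim exE conjE) (rule that; assumption)
  show "\<exists>d>0. \<forall>(n::nat) (l::nat \<Rightarrow> real) u. (\<forall>i<n. a \<le> l i \<and> l i \<le> u i \<and> u i \<le> b) \<and>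
        (\<forall>i<n. \<forall>k<n. i \<noteq> k \<longrightarrow> u i \<le> l k \<or> u k \<le> l i) \<and>
        (\<Sum>i<n. u i - l i) < d \<longrightarrow> (\<Sum>i<n. norm (B (f (u i)) - B (f (l i)))) < e"
  proof (intro exI[of _ d] conjI allI impI d)
    fix n :: nat and l u :: "nat \<Rightarrow> real"
    assume P: "(\<forall>i<n. a \<le> l i \<and> l i \<le> u i \<and> u i \<le> b) \<and>
        (\<forall>i<n. \<forall>k<n. i \<noteq> k \<longrightarrow> u i \<le> l k \<or> u k \<le> l i) \<and> (\<Sum>i<n. u i - l i) < d"
    have s: "(\<Sum>i<n. norm (f (u i) - f (l i))) < e / (M + 1)" using H0[rule_format, OF P] .
    have "(\<Sum>i<n. norm (B (f (u i)) - B (f (l i)))) \<le> (\<Sum>i<n. M * norm (f (u i) - f (l i)))"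
    proof (rule sum_mono)
      fix i assume "i \<in> {..<n}"
      then have "u i \<in> {a..b}" "l i \<in> {a..b}" using P by auto
      then show "norm (B (f (u i)) - B (f (l i))) \<le> M * norm (f (u i) - f (l i))"
        using lip fin by simp
    qed
    also have "\<dots> = M * (\<Sum>i<n. norm (f (u i) - f (l i)))" by (simp add: sum_distrib_left)
    also have "\<dots> \<le> (M + 1) * (\<Sum>i<n. norm (f (u i) - f (l i)))"
      by (intro mult_right_mono) (auto intro: sum_nonneg)
    also have "\<dots> < (M + 1) * (e / (M + 1))" by (intro mult_strict_left_mono s) (use M in simp)
    also have "\<dots> = e" using M by simp
    finally show "(\<Sum>i<n. norm (B (f (u i)) - B (f (l i)))) < e" .
  qed
qed


lemma flow_inv:
  fixes f :: "real \<Rightarrow> 'a::euclidean_space"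
  assumes ab: "a \<le> b" and sub: "{a..b} \<subseteq> I"
    and AC: "\<And>a' b'. a' \<le> b' \<Longrightarrow> {a'..b'} \<subseteq> I \<Longrightarrow> abs_continuous_on_interval f a' b'"
    and inC: "\<And>t. t \<in> interior I \<Longrightarrow> f t \<in> C"
    and N: "negligible N"
    and der: "\<And>t. t \<in> I - N \<Longrightarrow> \<exists>v. (f has_vector_derivative v) (at t within I) \<and> v \<in> F (f t)"
    and Kc: "closed K" and KX: "K \<subseteq> X"
    and Bpos: "\<And>x. x \<in> C \<Longrightarrow> x \<notin> K \<Longrightarrow> B x > 0" and Bneg: "\<And>x. x \<in> K \<Longrightarrow> B x \<le> 0"
    and W: "open W" "X \<subseteq> W" "\<And>x. x \<in> W \<Longrightarrow> (B has_derivative (\<lambda>h. gradB x \<bullet> h)) (at x)"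
       "continuous_on W gradB"
    and U: "open U" "frontier K \<subseteq> U"
    and cond1: "\<And>x \<eta>. x \<in> C \<Longrightarrow> x \<in> U \<Longrightarrow> x \<notin> K \<Longrightarrow> \<eta> \<in> F x \<Longrightarrow> \<eta> \<in> tangent_cone C x \<Longrightarrow>
        gradB x \<bullet> \<eta> \<le> 0"
    and fa: "f a \<in> K"
  shows "\<forall>t\<in>{a..b}. f t \<in> K"
proof (rule ccontr)
  assume "\<not> (\<forall>t\<in>{a..b}. f t \<in> K)"
  then obtain t1 where t1: "t1 \<in> {a..b}" "f t1 \<notin> K" by blast
  have fc: "continuous_on {a..b} f" using ac_imp_cont[OF AC[OF ab sub]] .
  define P where "P = {a..t1} \<inter> f -` K"
  have Pc: "closed P" unfolding P_def
    by (rule continuous_closed_preimage[OF continuous_on_subset[OF fc] closed_atLeastAtMost Kc]) (use t1 in auto)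
  have aP: "a \<in> P" using fa t1 by (auto simp: P_def)
  have Pb: "bdd_above P" unfolding P_def by (rule bdd_aboveI[of _ t1]) auto
  define s where "s = Sup P"
  have sP: "s \<in> P" unfolding s_def using closed_contains_Sup[OF _ Pb Pc] aP by blast
  have sup: "t \<le> s" if "t \<in> P" for t unfolding s_def using cSup_upper[OF that Pb] .
  have sa: "a \<le> s" "s \<le> t1" "f s \<in> K" using sP by (auto simp: P_def)
  have st1: "s < t1" using sa t1 by (cases "s = t1") auto
  have after: "f t \<notin> K" if "s < t" "t \<le> t1" for t
  proof
    assume "f t \<in> K"
    then have "t \<in> P" using that sa by (auto simp: P_def)
    then show False using sup[of t] that by simp
  qed
  have sab: "s \<in> {a..b}" using sa t1 by auto
  have fcs: "\<exists>d>0. \<forall>t\<in>{a..b}. dist t s < d \<longrightarrow> dist (f t) (f s) < e" if "e > 0" for e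
    using fc sab that unfolding continuous_on_iff by blast
  have intI: "t \<in> interior I" if "a < t" "t < b" for t
  proof -
    have "t \<in> interior {a..b}" using that by simp
    then show ?thesis using interior_mono[OF sub] by blast
  qed
  have fsfr: "f s \<in> frontier K"
  proof -
    have "f s \<notin> interior K"
    proof
      assume "f s \<in> interior K"
      then obtain e where e: "e > 0" "ball (f s) e \<subseteq> K" using mem_interior by blast
      obtain d where d: "d > 0" "\<forall>t\<in>{a..b}. dist t s < d \<longrightarrow> dist (f t) (f s) < e" using fcs[OF e(1)] by blast
      define t where "t = s + min (d/2) (t1 - s)"
      have t: "t \<in> {a..b}" "dist t s < d" "s < t" "t \<le> t1"
        using d(1) st1 sa t1 by (auto simp: t_def dist_real_def min_def)
      then have "f t \<in> ball (f s) e" using d(2) by (auto simp: dist_commute)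
      then show False using e(2) after[OF t(3,4)] by blast
    qed
    then show ?thesis using sa closure_subset unfolding frontier_def by auto
  qed
  have fsU: "f s \<in> U" using U fsfr by auto
  have fsW: "f s \<in> W" using sa KX W(2) by auto
  have "open (W \<inter> U)" using W(1) U(1) by auto
  then obtain \<rho> where \<rho>: "\<rho> > 0" "ball (f s) \<rho> \<subseteq> W \<inter> U"
    using fsU fsW open_contains_ball by blast
  have cb: "cball (f s) (\<rho>/2) \<subseteq> W \<inter> U"
  proof -
    have "cball (f s) (\<rho>/2) \<subseteq> ball (f s) \<rho>" using \<rho>(1) by (auto simp: subset_iff)
    then show ?thesis using \<rho>(2) by blast
  qed
  have \<rho>2: "\<rho>/2 > 0" using \<rho>(1) by simp
  obtain d where d: "d > 0" "\<forall>t\<in>{a..b}. dist t s < d \<longrightarrow> dist (f t) (f s) < \<rho>/2"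
    using fcs[OF \<rho>2] by blast
  define s' where "s' = s + min (d/2) ((t1 - s)/2)"
  have s': "s < s'" "s' < t1" "s' - s < d" using d(1) st1 by (auto simp: s'_def min_def field_simps)
  have in_cb: "f t \<in> cball (f s) (\<rho>/2)" if "t \<in> {s..s'}" for t
  proof -
    have "t \<in> {a..b}" "dist t s < d" using that sa s' t1 by (auto simp: dist_real_def)
    then show ?thesis using d(2) by (auto simp: dist_commute)
  qed
  have derW: "\<And>x. x \<in> cball (f s) (\<rho>/2) \<Longrightarrow> (B has_derivative (\<lambda>h. gradB x \<bullet> h)) (at x)"
    using W(3) cb by blast
  have contW: "continuous_on (cball (f s) (\<rho>/2)) gradB" using continuous_on_subset[OF W(4)] cb by blast
  obtain M where M: "M \<ge> 0" "\<And>x y. x \<in> cball (f s) (\<rho>/2) \<Longrightarrow> y \<in> cball (f s) (\<rho>/2) \<Longrightarrow>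
      \<bar>B x - B y\<bar> \<le> M * norm (x - y)"
    using lip_ball[OF derW contW] by blast
  have sub2: "{s..s'} \<subseteq> I" using sub sa s' t1 by auto
  have hAC: "abs_continuous_on_interval (\<lambda>t. B (f t)) s s'"
    by (rule ac_comp_lip[OF AC[OF _ sub2] in_cb M(2) M(1)]) (use s' in auto)
  have hder: "\<exists>dd. ((\<lambda>t. B (f t)) has_real_derivative dd) (at t) \<and> dd \<le> 0"
    if t: "s < t" "t < s'" "t \<notin> N" for t
  proof -
    have tI: "t \<in> interior I" using intI t sa s' t1 by auto
    hence "t \<in> I" using interior_subset by blast
    obtain v where v: "(f has_vector_derivative v) (at t within I)" "v \<in> F (f t)"
      using der \<open>t \<in> I\<close> t(3) by blast
    have v': "(f has_vector_derivative v) (at t)" using v(1) at_within_interior[OF tI] by simp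
    have ftC: "f t \<in> C" using inC tI .
    have ftcb: "f t \<in> cball (f s) (\<rho>/2)" using in_cb t by auto
    have ftU: "f t \<in> U" and ftW: "f t \<in> W" using ftcb cb by auto
    have ftK: "f t \<notin> K" using after t s' by auto
    have tang: "v \<in> tangent_cone C (f t)"
    proof (rule vd_tangent[OF v', of "(s' - t)/2"])
      show "(s' - t)/2 > 0" using t by simp
      fix \<tau> :: real assume "0 < \<tau>" "\<tau> \<le> (s' - t)/2"
      then have "t + \<tau> \<in> interior I" using intI t sa s' t1 by auto
      then show "f (t + \<tau>) \<in> C" using inC by blast
    qed
    have "gradB (f t) \<bullet> v \<le> 0" using cond1[OF ftC ftU ftK v(2) tang] .
    moreover have "((\<lambda>t. B (f t)) has_real_derivative gradB (f t) \<bullet> v) (at t)"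
      by (rule chain_inner[OF W(3)[OF ftW] v'])
    ultimately show ?thesis by blast
  qed
  have "B (f s') \<le> B (f s)" using ac_deriv_nonpos[OF _ hAC N hder] s' by auto
  moreover have "B (f s) \<le> 0" using Bneg sa by auto
  moreover have "B (f s') > 0"
  proof -
    have "s' \<in> interior I" using intI sa s' t1 by auto
    then have "f s' \<in> C" using inC by blast
    moreover have "f s' \<notin> K" using after s' by auto
    ultimately show ?thesis using Bpos by blast
  qed
  ultimately show False by linarith
qed

theorem theorem1:
  fixes X C D :: "'a::euclidean_space set"
    and F G :: "'a \<Rightarrow> 'a set"
    and p :: "'a \<Rightarrow> bool"
    and B :: "'a \<Rightarrow> real" and gradB :: "'a \<Rightarrow> 'a"
    and U :: "'a set"
  assumes XC: "C \<subseteq> X" and XD: "D \<subseteq> X"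
    and domF: "C \<subseteq> sv_dom F" and domG: "D \<subseteq> sv_dom G"
    and inX: "closure C \<union> D \<union> \<Union>(G ` D) \<subseteq> X"
    and Fmap: "\<forall>x\<in>X. F x \<subseteq> X" and Gmap: "\<forall>x\<in>X. G x \<subseteq> X"
    and F_osc: "outer_semicontinuous_on X F"
    and F_lb: "locally_bounded_on X F"
    and F_vals: "\<forall>x\<in>C. F x \<noteq> {} \<and> convex (F x)"
    and G_vals: "\<forall>x\<in>D. G x \<noteq> {}"
    and K_closed: "closed {x\<in>X. p x}"
    and K_ne: "{x\<in>X. p x} \<noteq> {}"
    and K_sub: "{x\<in>X. p x} \<subseteq> C \<union> D"
    and B_C1: "C1_with_gradient X B gradB"
    and B_cand: "barrier_candidate C D G {x\<in>X. p x} B"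
    and U_open: "open U" and U_nbhd: "frontier {x\<in>X. p x} \<subseteq> U"
    and cond1: "\<forall>x\<in>C \<inter> (U - {x\<in>X. p x}). \<forall>\<eta>\<in>F x \<inter> tangent_cone C x. gradB x \<bullet> \<eta> \<le> 0"
    and cond2: "\<forall>x\<in>D \<inter> {x\<in>X. p x}. \<forall>\<eta>\<in>G x. B \<eta> \<le> 0"
    and cond3: "\<Union>(G ` (D \<inter> {x\<in>X. p x})) \<subseteq> C \<union> D"
  shows "\<forall>E \<phi>. is_solution C F D G E \<phi> \<and> p (\<phi> 0 0) \<longrightarrow>
           (\<forall>tj\<in>E. models_always E \<phi> tj p)"
proof (intro allI impI ballI)
  fix E and \<phi> :: "real \<Rightarrow> nat \<Rightarrow> 'a" and tj
  assume H: "is_solution C F D G E \<phi> \<and> p (\<phi> 0 0)"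
  define K where "K = {x\<in>X. p x}"
  have arc: "hybrid_arc E \<phi>" and init: "\<phi> 0 0 \<in> closure C \<union> D"
    and flow: "\<And>j. interior (time_slice E j) \<noteq> {} \<Longrightarrow>
        (\<forall>t\<in>interior (time_slice E j). \<phi> t j \<in> C) \<and>
        (\<exists>N. negligible N \<and>
           (\<forall>t\<in>time_slice E j - N. \<exists>v.
              ((\<lambda>s. \<phi> s j) has_vector_derivative v) (at t within time_slice E j) \<and>
              v \<in> F (\<phi> t j)))"
    and jump: "\<And>t j. (t, j) \<in> E \<Longrightarrow> (t, Suc j) \<in> E \<Longrightarrow>
        \<phi> t j \<in> D \<and> \<phi> t (Suc j) \<in> G (\<phi> t j)"
    and p0: "p (\<phi> 0 0)"
    using H unfolding is_solution_def by blast+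
  have htd: "hybrid_time_domain E" using arc unfolding hybrid_arc_def by blast
  have lac: "\<And>j. locally_abs_continuous_on (time_slice E j) (\<lambda>t. \<phi> t j)"
    using arc unfolding hybrid_arc_def by blast
  obtain W where W: "open W" "X \<subseteq> W" "\<And>x. x \<in> W \<Longrightarrow> (B has_derivative (\<lambda>h. gradB x \<bullet> h)) (at x)"
       "continuous_on W gradB"
    using B_C1 unfolding C1_with_gradient_def by blast
  have Kc: "closed K" and KX: "K \<subseteq> X" using K_closed by (auto simp: K_def)
  have Bneg: "\<And>x. x \<in> K \<Longrightarrow> B x \<le> 0" using B_cand unfolding barrier_candidate_def K_def by blast
  have Bpos: "\<And>x. x \<in> C \<union> D \<Longrightarrow> x \<notin> K \<Longrightarrow> B x > 0"
    using B_cand unfolding barrier_candidate_def K_def by blast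
  have c1: "\<And>x \<eta>. x \<in> C \<Longrightarrow> x \<in> U \<Longrightarrow> x \<notin> K \<Longrightarrow> \<eta> \<in> F x \<Longrightarrow> \<eta> \<in> tangent_cone C x \<Longrightarrow>
        gradB x \<bullet> \<eta> \<le> 0" using cond1 unfolding K_def by blast
  have slice: "\<forall>t\<in>{a..b}. \<phi> t j \<in> K"
    if ab: "a \<le> b" and sub: "{a..b} \<subseteq> time_slice E j" and fa: "\<phi> a j \<in> K" for a b j
  proof (cases "a = b")
    case True then show ?thesis using fa by auto
  next
    case False
    then have "a < b" using ab by simp
    then have "interior (time_slice E j) \<noteq> {}"
      using interior_mono[OF sub] by (auto simp: interior_atLeastAtMost_real)
    from flow[OF this] obtain N where inC: "\<forall>t\<in>interior (time_slice E j). \<phi> t j \<in> C"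
      and N: "negligible N" and der: "\<forall>t\<in>time_slice E j - N. \<exists>v.
              ((\<lambda>s. \<phi> s j) has_vector_derivative v) (at t within time_slice E j) \<and> v \<in> F (\<phi> t j)"
      by blast
    show ?thesis
    proof (rule flow_inv[where f="\<lambda>t. \<phi> t j" and I="time_slice E j" and N=N and C=C and F=F and K=K
          and X=X and B=B and W=W and gradB=gradB and U=U, OF ab sub])
      show "abs_continuous_on_interval (\<lambda>t. \<phi> t j) a' b'"
        if "a' \<le> b'" "{a'..b'} \<subseteq> time_slice E j" for a' b'
        using lac[of j] that unfolding locally_abs_continuous_on_def by blast
    qed (use inC N der Kc KX Bpos Bneg W U_open U_nbhd c1 fa in \<open>auto simp: K_def\<close>)
  qed
  have key: "\<phi> t' j' \<in> K" if tE: "(t', j') \<in> E" for t' j'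
  proof -
    have "\<exists>tt :: nat \<Rightarrow> real. tt 0 = 0 \<and> (\<forall>j\<le>j'. tt j \<le> tt (Suc j)) \<and>
        E \<inter> ({0..t'} \<times> {0..j'}) = (\<Union>j\<in>{0..j'}. {tt j..tt (Suc j)} \<times> {j})"
      using bspec[OF htd[unfolded hybrid_time_domain_def] tE] by simp
    then obtain tt :: "nat \<Rightarrow> real" where tt0: "tt 0 = 0" and mono: "\<forall>j\<le>j'. tt j \<le> tt (Suc j)"
      and eqE: "E \<inter> ({0..t'} \<times> {0..j'}) = (\<Union>j\<in>{0..j'}. {tt j..tt (Suc j)} \<times> {j})"
      by (elim exE conjE) (rule that; assumption)
    have inE: "(t, j) \<in> E" if "j \<le> j'" "t \<in> {tt j..tt (Suc j)}" for t j
    proof -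
      have "(t, j) \<in> (\<Union>j\<in>{0..j'}. {tt j..tt (Suc j)} \<times> {j})" using that by auto
      then show ?thesis using eqE by blast
    qed
    have slsub: "{tt j..tt (Suc j)} \<subseteq> time_slice E j" if "j \<le> j'" for j
      using inE[OF that] by (auto simp: time_slice_def)
    have claim: "\<forall>t\<in>{tt j..tt (Suc j)}. \<phi> t j \<in> K" if "j \<le> j'" for j
      using that
    proof (induction j)
      case 0
      have "\<phi> 0 0 \<in> K" using init inX p0 by (auto simp: K_def)
      then show ?case using slice[OF _ slsub[OF 0]] mono 0 tt0 by auto
    next
      case (Suc j)
      have jj: "j \<le> j'" using Suc.prems by simp
      have IH: "\<forall>t\<in>{tt j..tt (Suc j)}. \<phi> t j \<in> K" using Suc.IH jj by blast
      have m1: "tt j \<le> tt (Suc j)" and m2: "tt (Suc j) \<le> tt (Suc (Suc j))" using mono jj Suc.prems by auto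
      define T where "T = tt (Suc j)"
      have x: "\<phi> T j \<in> K" using IH m1 by (auto simp: T_def)
      have E1: "(T, j) \<in> E" using inE[OF jj] m1 by (auto simp: T_def)
      have E2: "(T, Suc j) \<in> E" using inE[OF Suc.prems] m2 by (auto simp: T_def)
      from jump[OF E1 E2] have jD: "\<phi> T j \<in> D" and jG: "\<phi> T (Suc j) \<in> G (\<phi> T j)" by auto
      have "B (\<phi> T (Suc j)) \<le> 0" using cond2 jD x jG unfolding K_def by blast
      moreover have "\<phi> T (Suc j) \<in> C \<union> D" using cond3 jD x jG unfolding K_def by blast
      ultimately have "\<phi> T (Suc j) \<in> K" using Bpos by force
      then show ?case using slice[OF m2 slsub[OF Suc.prems]] by (simp add: T_def)
    qed
    have "(0, 0) \<in> (\<Union>j\<in>{0..j'}. {tt j..tt (Suc j)} \<times> {j})" using tt0 mono by force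
    then have "((0::real), (0::nat)) \<in> E \<inter> ({0..t'} \<times> {0..j'})" using eqE by blast
    then have "(0::real) \<le> t'" by auto
    then have "(t', j') \<in> E \<inter> ({0..t'} \<times> {0..j'})" using tE by auto
    then have "(t', j') \<in> (\<Union>j\<in>{0..j'}. {tt j..tt (Suc j)} \<times> {j})" using eqE by blast
    then have "t' \<in> {tt j'..tt (Suc j')}" by auto
    then show ?thesis using claim[of j'] by auto
  qed
  show "models_always E \<phi> tj p" unfolding models_always_def using key by (auto simp: K_def)
qed

end
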